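(* Let $(X,f)$ be a dynamical system and let $q_0:X\to Y_0$ and $q_1:X\to Y_1$ be quotient maps (continuous surjections onto compact Hausdorff spaces) such that $\ker(q_0)\sqsubseteq\ker(q_1)$. Then $\tilde h(X,f,q_0)\geq\tilde h(X,f,q_1)$.
   Context: A dynamical system is a pair $(X,f)$ with $X$ compact Hausdorff and $f:X\to X$ a continuous surjection. $\ker(q)$ denotes the equivalence relation (partition into fibers) induced by $q$ on $X$, and $\ker(q_0)\sqsubseteq\ker(q_1)$ means the partition of $q_0$ refines that of $q_1$ (every fiber of $q_0$ lies in a fiber of $q_1$). The quotient-topological entropy is $\tilde h(X,f,q)=\sup\{\mathrm{GR}_n(\#\bigvee_{i=0}^n f^{-i}(q^{-1}\mathcal U)):\mathcal U\text{ open cover of the target of } q\}$, where $\mathrm{GR}_t(x_t)=\limsup_{t\to\infty}\frac1t\ln x_t$, $\#\mathcal C$ is the minimal cardinality of a finite subcover of $\mathcal C$, and $\mathcal A\vee\mathcal B=\{A\cap B\}_{A\in\mathcal A,B\in\mathcal B}$. *)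

theory Defs
  imports "HOL-Analysis.Analysis"
begin

definition dyn_system :: "'a topology \<Rightarrow> ('a \<Rightarrow> 'a) \<Rightarrow> bool" where
  "dyn_system X f \<longleftrightarrow> compact_space X \<and> Hausdorff_space X \<and>
     continuous_map X X f \<and> f ` topspace X = topspace X"

definition cts_quotient :: "'a topology \<Rightarrow> 'b topology \<Rightarrow> ('a \<Rightarrow> 'b) \<Rightarrow> bool" where
  "cts_quotient X Y q \<longleftrightarrow> compact_space Y \<and> Hausdorff_space Y \<and>
     continuous_map X Y q \<and> q ` topspace X = topspace Y"

definition ker_refines :: "'a topology \<Rightarrow> ('a \<Rightarrow> 'b) \<Rightarrow> ('a \<Rightarrow> 'c) \<Rightarrow> bool" where
  "ker_refines X q0 q1 \<longleftrightarrow>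
     (\<forall>x\<in>topspace X. \<forall>y\<in>topspace X. q0 x = q0 y \<longrightarrow> q1 x = q1 y)"

definition open_cover :: "'b topology \<Rightarrow> 'b set set \<Rightarrow> bool" where
  "open_cover Y U \<longleftrightarrow> (\<forall>A\<in>U. openin Y A) \<and> \<Union>U = topspace Y"

definition preimage_cover :: "'a topology \<Rightarrow> ('a \<Rightarrow> 'b) \<Rightarrow> 'b set set \<Rightarrow> 'a set set" where
  "preimage_cover X q U = (\<lambda>A. {x \<in> topspace X. q x \<in> A}) ` U"

definition join_cover :: "'a set set \<Rightarrow> 'a set set \<Rightarrow> 'a set set" where
  "join_cover A B = {a \<inter> b | a b. a \<in> A \<and> b \<in> B}"

fun dyn_join :: "'a topology \<Rightarrow> ('a \<Rightarrow> 'a) \<Rightarrow> ('a \<Rightarrow> 'b) \<Rightarrow> 'b set set \<Rightarrow> nat \<Rightarrow> 'a set set" where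
  "dyn_join X f q U 0 = preimage_cover X q U"
| "dyn_join X f q U (Suc n) =
     join_cover (dyn_join X f q U n) (preimage_cover X (q \<circ> (f ^^ Suc n)) U)"

definition min_subcover_card :: "'a topology \<Rightarrow> 'a set set \<Rightarrow> nat" where
  "min_subcover_card X C = Inf {card D | D. D \<subseteq> C \<and> finite D \<and> \<Union>D = topspace X}"

definition growth_rate :: "(nat \<Rightarrow> real) \<Rightarrow> ereal" where
  "growth_rate x = limsup (\<lambda>t. ereal (ln (x t) / real t))"

definition qt_entropy :: "'a topology \<Rightarrow> ('a \<Rightarrow> 'a) \<Rightarrow> 'b topology \<Rightarrow> ('a \<Rightarrow> 'b) \<Rightarrow> ereal" where
  "qt_entropy X f Y q =
     (SUP U \<in> {U. open_cover Y U}.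
        growth_rate (\<lambda>n. real (min_subcover_card X (dyn_join X f q U n))))"

end

theory Submission
  imports Defs
begin

theorem mainTheorem3:
  fixes X :: "'a topology" and Y0 :: "'b topology" and Y1 :: "'c topology"
    and f :: "'a \<Rightarrow> 'a" and q0 :: "'a \<Rightarrow> 'b" and q1 :: "'a \<Rightarrow> 'c"
  assumes "dyn_system X f"
    and "cts_quotient X Y0 q0"
    and "cts_quotient X Y1 q1"
    and "ker_refines X q0 q1"
  shows "qt_entropy X f Y0 q0 \<ge> qt_entropy X f Y1 q1"
proof -
  have cX: "compact_space X" and fX: "continuous_map X X f"
    using assms(1) unfolding dyn_system_def by auto
  have q0c: "continuous_map X Y0 q0" and q0s: "q0 ` topspace X = topspace Y0"
    and hY0: "Hausdorff_space Y0"
    using assms(2) unfolding cts_quotient_def by auto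
  have q1c: "continuous_map X Y1 q1"
    using assms(3) unfolding cts_quotient_def by auto
  define g where "g y = q1 (SOME x. x \<in> topspace X \<and> q0 x = y)" for y
  have gq: "g (q0 x) = q1 x" if "x \<in> topspace X" for x
  proof -
    have ex: "\<exists>x'. x' \<in> topspace X \<and> q0 x' = q0 x" using that by blast
    from someI_ex[OF ex] show ?thesis
      using assms(4) that unfolding g_def ker_refines_def by metis
  qed
  have qm: "quotient_map X Y0 q0"
    by (meson continuous_closed_imp_quotient_map continuous_imp_closed_map cX hY0 q0c q0s)
  have "continuous_map X Y1 (g \<circ> q0)"
    using q1c by (rule continuous_map_eq) (simp add: gq)
  hence gc: "continuous_map Y0 Y1 g"
    using continuous_compose_quotient_map[OF qm] by blast
  have fn: "(f ^^ n) x \<in> topspace X" if "x \<in> topspace X" for n x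
    using that fX by (induction n) (auto simp: continuous_map_def)
  define V where "V U = (\<lambda>A. {y \<in> topspace Y0. g y \<in> A}) ` U" for U
  have pc: "preimage_cover X (q0 \<circ> (f ^^ n)) (V U) = preimage_cover X (q1 \<circ> (f ^^ n)) U" for n U
  proof -
    have "{x \<in> topspace X. (q0 \<circ> (f ^^ n)) x \<in> {y \<in> topspace Y0. g y \<in> A}}
          = {x \<in> topspace X. (q1 \<circ> (f ^^ n)) x \<in> A}" for A
      using fn gq q0c by (auto simp: continuous_map_def)
    thus ?thesis unfolding preimage_cover_def V_def image_image by simp
  qed
  have dj: "dyn_join X f q0 (V U) n = dyn_join X f q1 U n" for U n
  proof (induction n)
    case 0
    show ?case using pc[of 0 U] by simp
  next
    case (Suc n)
    then show ?case using pc[of "Suc n" U] by simp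
  qed
  have oc: "open_cover Y0 (V U)" if "open_cover Y1 U" for U
  proof -
    have "openin Y0 B" if "B \<in> V U" for B
      using that \<open>open_cover Y1 U\<close> gc unfolding V_def open_cover_def
      by (auto intro: openin_continuous_map_preimage)
    moreover have "\<Union>(V U) = topspace Y0"
      using \<open>open_cover Y1 U\<close> gc unfolding V_def open_cover_def
      by (auto simp: continuous_map_def)
    ultimately show ?thesis unfolding open_cover_def by blast
  qed
  show ?thesis unfolding qt_entropy_def
  proof (rule SUP_least)
    fix U assume "U \<in> {U. open_cover Y1 U}"
    hence "V U \<in> {U. open_cover Y0 U}" using oc by blast
    hence "growth_rate (\<lambda>n. real (min_subcover_card X (dyn_join X f q0 (V U) n)))
       \<le> (SUP U \<in> {U. open_cover Y0 U}. growth_rate (\<lambda>n. real (min_subcover_card X (dyn_join X f q0 U n))))"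
      by (rule SUP_upper)
    thus "growth_rate (\<lambda>n. real (min_subcover_card X (dyn_join X f q1 U n)))
       \<le> (SUP U \<in> {U. open_cover Y0 U}. growth_rate (\<lambda>n. real (min_subcover_card X (dyn_join X f q0 U n))))"
      by (simp add: dj)
  qed
qed

end
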